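(* Let $E\subset\mathbb{Q}_p$ be a $p$-homogeneous discrete set. Then there exists an isometry $f:\mathbb{Q}_p\to\mathbb{Q}_p$ (with respect to $|\cdot|_p$) such that $$f(E)=\widehat E:=\Big\{\sum_{i\in I_E}\beta_ip^i:\ \beta_i\in\{0,1,\dots,p-1\},\ \text{only finitely many }\beta_i\neq0\Big\}.$$
   Context: $p\ge2$ is a prime, $v_p$ is the $p$-adic valuation and $|x|_p=p^{-v_p(x)}$. Balls are $B(a,p^{-n})=a+p^n\mathbb{Z}_p$. Admissible $p$-orders: $I_E=\{v_p(x-y):x,y\in E,\ x\ne y\}$ and $I_E^{\ge n}=\{i\in I_E:i\ge n\}$. $p$-homogeneous discrete set: $E$ with $I_E$ bounded above is $p$-homogeneous if $\sharp(E\cap B(a,p^{-n}))\in\{0,\ p^{\sharp I_E^{\ge n}}\}$ for all $n\in\mathbb{Z}$ and all $a\in\mathbb{Q}_p$. *)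

theory Defs
  imports Complex_Main "HOL-Computational_Algebra.Primes"
begin

text \<open>The field Q_p is modelled by p-adic digit expansions: an element is
  x = sum over i of (x i) * p^i with digits 0 <= x i < p, and only finitely many
  nonzero digits at negative indices.  This is a bijective model of Q_p.\<close>

definition Qp :: "nat \<Rightarrow> (int \<Rightarrow> nat) set" where
  "Qp p = {x. (\<forall>i. x i < p) \<and> (\<exists>N. \<forall>i<N. x i = 0)}"

fun padic_borrow :: "(int \<Rightarrow> nat) \<Rightarrow> (int \<Rightarrow> nat) \<Rightarrow> int \<Rightarrow> nat \<Rightarrow> int" where
  "padic_borrow x y N 0 = 0"
| "padic_borrow x y N (Suc k) =
     (if int (x (N + int k)) - int (y (N + int k)) - padic_borrow x y N k < 0 then 1 else 0)"

definition padic_sub :: "nat \<Rightarrow> (int \<Rightarrow> nat) \<Rightarrow> (int \<Rightarrow> nat) \<Rightarrow> (int \<Rightarrow> nat)" where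
  "padic_sub p x y =
     (let N = (SOME N. \<forall>i<N. x i = 0 \<and> y i = 0)
      in (\<lambda>i. if i < N then 0
               else nat ((int (x i) - int (y i) - padic_borrow x y N (nat (i - N))) mod int p)))"

definition padic_val :: "(int \<Rightarrow> nat) \<Rightarrow> int" where
  "padic_val z = (THE i. z i \<noteq> 0 \<and> (\<forall>j<i. z j = 0))"

definition padic_abs :: "nat \<Rightarrow> (int \<Rightarrow> nat) \<Rightarrow> real" where
  "padic_abs p z = (if z = (\<lambda>_. 0) then 0 else real p powr (- real_of_int (padic_val z)))"

text \<open>Embedding of nonnegative elements of Z[1/p] (base-p expansion).\<close>
definition padic_of_nonneg :: "nat \<Rightarrow> rat \<Rightarrow> (int \<Rightarrow> nat)" where
  "padic_of_nonneg p r = (\<lambda>i. nat (\<lfloor>r / (of_nat p) powi i\<rfloor> mod int p))"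

definition padic_orders :: "nat \<Rightarrow> (int \<Rightarrow> nat) set \<Rightarrow> int set" where
  "padic_orders p E = {padic_val (padic_sub p x y) | x y. x \<in> E \<and> y \<in> E \<and> x \<noteq> y}"

definition padic_ball :: "nat \<Rightarrow> (int \<Rightarrow> nat) \<Rightarrow> int \<Rightarrow> (int \<Rightarrow> nat) set" where
  "padic_ball p a n = {x \<in> Qp p. padic_abs p (padic_sub p x a) \<le> real p powr (- real_of_int n)}"

definition p_homogeneous :: "nat \<Rightarrow> (int \<Rightarrow> nat) set \<Rightarrow> bool" where
  "p_homogeneous p E \<longleftrightarrow>
     E \<subseteq> Qp p \<and> bdd_above (padic_orders p E) \<and>
     (\<forall>n::int. \<forall>a \<in> Qp p.
        finite (E \<inter> padic_ball p a n) \<and>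
        card (E \<inter> padic_ball p a n) \<in> {0, p ^ card {i \<in> padic_orders p E. i \<ge> n}})"

definition padic_hat :: "nat \<Rightarrow> (int \<Rightarrow> nat) set \<Rightarrow> (int \<Rightarrow> nat) set" where
  "padic_hat p E =
     {padic_of_nonneg p (\<Sum>i \<in> {i \<in> padic_orders p E. \<beta> i \<noteq> 0}. of_nat (\<beta> i) * (of_nat p) powi i)
      | \<beta>. (\<forall>i \<in> padic_orders p E. \<beta> i < p) \<and> finite {i \<in> padic_orders p E. \<beta> i \<noteq> 0}}"

definition padic_isometry :: "nat \<Rightarrow> ((int \<Rightarrow> nat) \<Rightarrow> (int \<Rightarrow> nat)) \<Rightarrow> bool" where
  "padic_isometry p f \<longleftrightarrow> f ` Qp p \<subseteq> Qp p \<and>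
     (\<forall>x \<in> Qp p. \<forall>y \<in> Qp p. padic_abs p (padic_sub p (f x) (f y)) = padic_abs p (padic_sub p x y))"

end

theory Submission imports Defs begin

lemma Qp_low: "x \<in> Qp p \<Longrightarrow> \<exists>N. \<forall>i<N. x i = 0" by (auto simp: Qp_def)
lemma Qp_dig: "x \<in> Qp p \<Longrightarrow> x i < p" by (auto simp: Qp_def)

lemma sub_low:
  assumes x: "x \<in> Qp p" and y: "y \<in> Qp p" and agree: "\<forall>i<m. x i = y i"
  shows "\<forall>i<m. padic_sub p x y i = 0"
    and "x m \<noteq> y m \<Longrightarrow> padic_sub p x y m \<noteq> 0"
proof -
  obtain N1 where N1: "\<forall>i<N1. x i = 0" using Qp_low[OF x] by blast
  obtain N2 where N2: "\<forall>i<N2. y i = 0" using Qp_low[OF y] by blast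
  have ex: "\<exists>N. \<forall>i<N. x i = 0 \<and> y i = 0"
    by (rule exI[of _ "min N1 N2"]) (use N1 N2 in auto)
  define N where "N = (SOME N. \<forall>i<N. x i = 0 \<and> y i = 0)"
  have Np: "\<forall>i<N. x i = 0 \<and> y i = 0" unfolding N_def using someI_ex[OF ex] .
  have bor: "padic_borrow x y N k = 0" if "int k \<le> m - N" for k
    using that
  proof (induction k)
    case 0 then show ?case by simp
  next
    case (Suc k)
    then have "N + int k < m" by simp
    then have "x (N + int k) = y (N + int k)" using agree by blast
    with Suc show ?case by simp
  qed
  have sub_eq: "padic_sub p x y = (\<lambda>i. if i < N then 0 else nat ((int (x i) - int (y i) - padic_borrow x y N (nat (i - N))) mod int p))"
    unfolding padic_sub_def N_def Let_def by simp
  show "\<forall>i<m. padic_sub p x y i = 0"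
  proof (intro allI impI)
    fix i assume "i < m"
    then have "x i = y i" using agree by blast
    moreover have "i \<ge> N \<Longrightarrow> padic_borrow x y N (nat (i - N)) = 0"
      using bor[of "nat (i - N)"] \<open>i < m\<close> by simp
    ultimately show "padic_sub p x y i = 0" unfolding sub_eq by simp
  qed
  assume ne: "x m \<noteq> y m"
  have "m \<ge> N" using Np ne by (metis not_le)
  have b0: "padic_borrow x y N (nat (m - N)) = 0" using bor[of "nat (m - N)"] \<open>m \<ge> N\<close> by simp
  have xm: "x m < p" "y m < p" using Qp_dig[OF x] Qp_dig[OF y] by auto
  define d where "d = int (x m) - int (y m)"
  have dne: "d \<noteq> 0" using ne unfolding d_def by simp
  have "\<bar>d\<bar> < int p" using xm unfolding d_def by auto
  have "\<not> int p dvd d"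
  proof
    assume "int p dvd d"
    then have "\<bar>int p\<bar> \<le> \<bar>d\<bar>" using dvd_imp_le_int[OF dne] by blast
    with \<open>\<bar>d\<bar> < int p\<close> show False by simp
  qed
  then have "d mod int p \<noteq> 0" by (simp add: dvd_eq_mod_eq_0)
  moreover have "d mod int p \<ge> 0" using xm by simp
  ultimately show "padic_sub p x y m \<noteq> 0"
    unfolding sub_eq using \<open>m \<ge> N\<close> b0 d_def by simp
qed

lemma val_eq: "z m \<noteq> 0 \<Longrightarrow> \<forall>i<m. z i = 0 \<Longrightarrow> padic_val z = m"
  unfolding padic_val_def
proof (rule the_equality)
  fix i assume h: "z m \<noteq> 0" "\<forall>i<m. z i = 0" "z i \<noteq> 0 \<and> (\<forall>j<i. z j = 0)"
  show "i = m"
  proof (rule ccontr)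
    assume "i \<noteq> m"
    then consider "i < m" | "m < i" by linarith
    then show False using h by cases auto
  qed
qed auto

lemma sub_val:
  assumes "x \<in> Qp p" "y \<in> Qp p" "\<forall>i<m. x i = y i" "x m \<noteq> y m"
  shows "padic_val (padic_sub p x y) = m" "padic_sub p x y \<noteq> (\<lambda>_. 0)"
  using sub_low[OF assms(1-3)] assms(4) val_eq by (auto dest: fun_cong[of _ _ m])

lemma sub_self: "x \<in> Qp p \<Longrightarrow> padic_sub p x x = (\<lambda>_. 0)"
proof
  fix i assume "x \<in> Qp p"
  from sub_low(1)[OF this this, of "i+1"] show "padic_sub p x x i = 0" by simp
qed

lemma first_diff:
  assumes "x \<in> Qp p" "y \<in> Qp p" "x \<noteq> y"
  shows "\<exists>m. (\<forall>i<m. x i = y i) \<and> x m \<noteq> y m"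
proof -
  obtain N1 where N1: "\<forall>i<N1. x i = 0" using Qp_low[OF assms(1)] by blast
  obtain N2 where N2: "\<forall>i<N2. y i = 0" using Qp_low[OF assms(2)] by blast
  define N where "N = min N1 N2"
  have agN: "\<forall>i<N. x i = y i" using N1 N2 unfolding N_def by auto
  obtain j where "x j \<noteq> y j" using assms(3) by blast
  then have "j \<ge> N" using agN by (meson not_le)
  then have ex: "\<exists>k::nat. x (N + int k) \<noteq> y (N + int k)"
    using \<open>x j \<noteq> y j\<close> by (intro exI[of _ "nat (j - N)"]) simp
  define k where "k = (LEAST k::nat. x (N + int k) \<noteq> y (N + int k))"
  have k1: "x (N + int k) \<noteq> y (N + int k)" unfolding k_def by (rule LeastI_ex[OF ex])
  have k2: "\<forall>i<N + int k. x i = y i"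
  proof (intro allI impI)
    fix i assume i: "i < N + int k"
    show "x i = y i"
    proof (cases "i < N")
      case True then show ?thesis using agN by blast
    next
      case False
      then have "nat (i - N) < k" using i by simp
      then have "x (N + int (nat (i - N))) = y (N + int (nat (i - N)))"
        unfolding k_def using not_less_Least by blast
      with False show ?thesis by simp
    qed
  qed
  show ?thesis using k1 k2 by blast
qed

lemma abs_first:
  assumes "x \<in> Qp p" "y \<in> Qp p" "\<forall>i<m. x i = y i" "x m \<noteq> y m"
  shows "padic_abs p (padic_sub p x y) = real p powr (- real_of_int m)"
  using sub_val[OF assms] unfolding padic_abs_def by simp

lemma ball_cyl:
  assumes p: "p > 1" and a: "a \<in> Qp p"
  shows "padic_ball p a n = {x \<in> Qp p. \<forall>i<n. x i = a i}"
proof -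
  have "padic_abs p (padic_sub p x a) \<le> real p powr (- real_of_int n) \<longleftrightarrow> (\<forall>i<n. x i = a i)"
    if x: "x \<in> Qp p" for x
  proof (cases "x = a")
    case True then show ?thesis using sub_self[OF a] by (simp add: padic_abs_def)
  next
    case False
    then obtain m where m: "\<forall>i<m. x i = a i" "x m \<noteq> a m" using first_diff[OF x a] by blast
    have "padic_abs p (padic_sub p x a) = real p powr (- real_of_int m)" by (rule abs_first[OF x a m])
    moreover have "real p powr (- real_of_int m) \<le> real p powr (- real_of_int n) \<longleftrightarrow> n \<le> m"
      using p by simp
    moreover have "(\<forall>i<n. x i = a i) \<longleftrightarrow> n \<le> m"
    proof
      assume "\<forall>i<n. x i = a i" then show "n \<le> m" using m(2) by (meson not_le)
    next
      assume "n \<le> m" then show "\<forall>i<n. x i = a i" using m(1) by auto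
    qed
    ultimately show ?thesis by simp
  qed
  then show ?thesis unfolding padic_ball_def by auto
qed


lemma sum_lt_pow:
  fixes b :: "int \<Rightarrow> nat"
  assumes p: "p > 1" and b: "\<forall>i. b i < p"
  shows "finite T \<Longrightarrow> \<forall>i\<in>T. i < k \<Longrightarrow> (\<Sum>i\<in>T. of_nat (b i) * (of_nat p::rat) powi i) < of_nat p powi k"
proof (induction "card T" arbitrary: T k)
  case 0
  then show ?case using p by simp
next
  case (Suc n)
  then have ne: "T \<noteq> {}" by auto
  define a where "a = Max T"
  have aT: "a \<in> T" using Suc ne unfolding a_def by simp
  have "a < k" using Suc aT by blast
  define T' where "T' = T - {a}"
  have T'lt: "\<forall>i\<in>T'. i < a" using Suc unfolding T'_def a_def
    by (metis DiffE Max_ge insertI1 order_le_less)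
  have "card T' = n" using Suc aT unfolding T'_def by simp
  then have IH: "(\<Sum>i\<in>T'. of_nat (b i) * (of_nat p::rat) powi i) < of_nat p powi a"
    using Suc T'lt unfolding T'_def by simp
  have sumT: "(\<Sum>i\<in>T. of_nat (b i) * (of_nat p::rat) powi i) = of_nat (b a) * of_nat p powi a + (\<Sum>i\<in>T'. of_nat (b i) * (of_nat p::rat) powi i)"
    unfolding T'_def using Suc aT by (simp add: sum.remove)
  have pa: "(of_nat p::rat) powi a > 0" using p by simp
  have ba: "of_nat (b a) \<le> (of_nat p::rat) - 1" using b[rule_format, of a] by (simp add: of_nat_diff[symmetric] less_eq_real_def) 
  have "of_nat (b a) * of_nat p powi a \<le> ((of_nat p::rat) - 1) * of_nat p powi a"
    using ba pa by (intro mult_right_mono) auto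
  then have "(\<Sum>i\<in>T. of_nat (b i) * (of_nat p::rat) powi i) < of_nat p * of_nat p powi a"
    using IH sumT by (simp add: algebra_simps)
  also have "of_nat p * (of_nat p::rat) powi a = of_nat p powi (a + 1)"
    using p by (simp add: power_int_add)
  also have "\<dots> \<le> of_nat p powi k"
    using p \<open>a < k\<close> by (intro power_int_increasing) auto
  finally show ?case .
qed

lemma digits:
  fixes b :: "int \<Rightarrow> nat"
  assumes p: "p > 1" and fin: "finite S" and b: "\<forall>i. b i < p" and bz: "\<forall>i. i \<notin> S \<longrightarrow> b i = 0"
  shows "padic_of_nonneg p (\<Sum>i\<in>S. of_nat (b i) * (of_nat p::rat) powi i) = b"
proof
  fix k
  define f where "f i = of_nat (b i) * (of_nat p::rat) powi i" for i
  define S' where "S' = insert k S"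
  have fin': "finite S'" using fin unfolding S'_def by simp
  have "(\<Sum>i\<in>S. f i) = (\<Sum>i\<in>S'. f i)"
    unfolding S'_def using fin bz by (intro sum.mono_neutral_left) (auto simp: f_def)
  define A where "A = {i\<in>S'. i < k}"
  define B where "B = {i\<in>S'. k < i}"
  have SA: "S' - {k} = A \<union> B" unfolding A_def B_def by auto
  have "(\<Sum>i\<in>S'. f i) = f k + (\<Sum>i\<in>S'-{k}. f i)"
    using fin' by (intro sum.remove) (auto simp: S'_def)
  also have "(\<Sum>i\<in>S'-{k}. f i) = (\<Sum>i\<in>A. f i) + (\<Sum>i\<in>B. f i)"
    unfolding SA using fin' by (intro sum.union_disjoint) (auto simp: A_def B_def)
  finally have sumeq: "(\<Sum>i\<in>S. f i) = f k + (\<Sum>i\<in>A. f i) + (\<Sum>i\<in>B. f i)"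
    using \<open>(\<Sum>i\<in>S. f i) = (\<Sum>i\<in>S'. f i)\<close> by simp
  have pk: "(of_nat p::rat) powi k > 0" using p by simp
  define F where "F = (\<Sum>i\<in>A. f i) / of_nat p powi k"
  have F0: "0 \<le> F" unfolding F_def f_def using p by (intro divide_nonneg_pos sum_nonneg) auto
  have sA: "(\<Sum>i\<in>A. f i) < of_nat p powi k" unfolding f_def
    by (rule sum_lt_pow[OF p b]) (use fin' in \<open>auto simp: A_def\<close>)
  have F1: "F < 1" unfolding F_def using sA pk by (simp only: divide_less_eq_1_pos)
  define G where "G = (\<Sum>i\<in>B. int (b i) * int p ^ nat (i - k - 1))"
  have Bterm: "f i / of_nat p powi k = of_nat p * of_int (int (b i) * int p ^ nat (i - k - 1))"
    if "i \<in> B" for i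
  proof -
    have "i - k - 1 \<ge> 0" using that unfolding B_def by auto
    have "(of_nat p::rat) powi i / of_nat p powi k = of_nat p powi (i - k)"
      using p by (simp add: power_int_diff)
    also have "i - k = int (Suc (nat (i - k - 1)))" using \<open>i - k - 1 \<ge> 0\<close> by simp
    also have "(of_nat p::rat) powi int (Suc (nat (i - k - 1))) = of_nat p * of_nat p ^ nat (i - k - 1)"
      by (simp only: power_int_of_nat power_Suc)
    finally have h: "(of_nat p::rat) powi i / of_nat p powi k = of_nat p * of_nat p ^ nat (i - k - 1)" .
    show ?thesis unfolding f_def times_divide_eq_right[symmetric] h
      by (simp only: of_int_mult of_int_of_nat_eq of_int_power mult.left_commute)
  qed
  have GB: "(\<Sum>i\<in>B. f i) / of_nat p powi k = of_nat p * of_int G"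
    unfolding G_def of_int_sum sum_divide_distrib sum_distrib_left using Bterm by (intro sum.cong) auto
  have fk: "f k / of_nat p powi k = of_nat (b k)" unfolding f_def using pk p by simp
  have eqS: "(\<Sum>i\<in>S. f i) / of_nat p powi k = F + of_int (int (b k) + int p * G)"
    unfolding sumeq F_def using GB fk by (simp add: add_divide_distrib)
  have fl: "\<lfloor>(\<Sum>i\<in>S. f i) / of_nat p powi k\<rfloor> = int (b k) + int p * G"
  proof -
    have F00: "\<lfloor>F\<rfloor> = 0" using F0 F1 by (intro floor_unique) auto
    show ?thesis unfolding eqS floor_add_int[symmetric] F00 by (rule add_0)
  qed
  have "(int (b k) + int p * G) mod int p = int (b k)"
    using b[rule_format, of k] by simp
  then show "padic_of_nonneg p (\<Sum>i\<in>S. of_nat (b i) * (of_nat p::rat) powi i) k = b k"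
    unfolding padic_of_nonneg_def using fl unfolding f_def by simp
qed


definition sw :: "nat \<Rightarrow> nat \<Rightarrow> nat \<Rightarrow> nat" where
  "sw a b d = (if d = a then b else if d = b then a else d)"

definition cnd :: "nat \<Rightarrow> (int \<Rightarrow> nat) set \<Rightarrow> (int \<Rightarrow> nat) \<Rightarrow> int \<Rightarrow> bool" where
  "cnd p E x i = (i \<notin> padic_orders p E \<and> (\<exists>e\<in>E. \<forall>j<i. e j = x j))"

definition ch :: "(int \<Rightarrow> nat) set \<Rightarrow> (int \<Rightarrow> nat) \<Rightarrow> int \<Rightarrow> nat" where
  "ch E x i = (SOME e. e \<in> E \<and> (\<forall>j<i. e j = x j)) i"

definition fm :: "nat \<Rightarrow> (int \<Rightarrow> nat) set \<Rightarrow> (int \<Rightarrow> nat) \<Rightarrow> (int \<Rightarrow> nat)" where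
  "fm p E x = (\<lambda>i. if cnd p E x i then sw (ch E x i) 0 (x i) else x i)"

locale hom =
  fixes p :: nat and E :: "(int \<Rightarrow> nat) set"
  assumes prime: "prime p" and ne: "E \<noteq> {}" and hom: "p_homogeneous p E"
begin

abbreviation "I \<equiv> padic_orders p E"
abbreviation "f \<equiv> fm p E"

lemma p1: "p > 1" using prime prime_gt_1_nat by blast
lemma EQ: "E \<subseteq> Qp p" using hom unfolding p_homogeneous_def by blast
lemma Ibdd: "\<exists>M. \<forall>i\<in>I. i \<le> M" using hom unfolding p_homogeneous_def bdd_above_def by blast

lemma K: assumes "e \<in> E" "e' \<in> E" "\<forall>j<i. e j = e' j" "e i \<noteq> e' i" shows "i \<in> I"
proof -
  have "padic_val (padic_sub p e e') = i" using sub_val(1)[of e p e' i] assms EQ by blast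
  moreover have "e \<noteq> e'" using assms(4) by blast
  ultimately show ?thesis unfolding padic_orders_def using assms(1,2) by blast
qed

lemma K': "e \<in> E \<Longrightarrow> e' \<in> E \<Longrightarrow> \<forall>j<i. e j = e' j \<Longrightarrow> i \<notin> I \<Longrightarrow> e i = e' i"
  using K by blast

lemma pref: assumes "\<forall>j<i. x j = y j" shows "cnd p E x i = cnd p E y i" "ch E x i = ch E y i"
proof -
  have "(\<lambda>e. e \<in> E \<and> (\<forall>j<i. e j = x j)) = (\<lambda>e. e \<in> E \<and> (\<forall>j<i. e j = y j))"
    using assms by auto
  then show "cnd p E x i = cnd p E y i" "ch E x i = ch E y i"
    unfolding cnd_def ch_def using assms by (auto simp: fun_eq_iff)
qed

lemma f_pref: "\<forall>j\<le>i. x j = y j \<Longrightarrow> f x i = f y i"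
  using pref[of i x y] unfolding fm_def by simp

lemma ch_eq: assumes "cnd p E x i" "e \<in> E" "\<forall>j<i. e j = x j" shows "ch E x i = e i"
proof -
  have ex: "\<exists>e. e \<in> E \<and> (\<forall>j<i. e j = x j)" using assms by blast
  define e' where "e' = (SOME e. e \<in> E \<and> (\<forall>j<i. e j = x j))"
  have e': "e' \<in> E" "\<forall>j<i. e' j = x j" using someI_ex[OF ex] unfolding e'_def by auto
  have "e' i = e i" using K'[OF e'(1) assms(2)] e'(2) assms(1,3) unfolding cnd_def by auto
  then show ?thesis unfolding ch_def e'_def by simp
qed

lemma f_E: "e \<in> E \<Longrightarrow> f e i = (if i \<in> I then e i else 0)"
proof -
  assume e: "e \<in> E"
  show ?thesis
  proof (cases "i \<in> I")
    case True then show ?thesis unfolding fm_def cnd_def by simp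
  next
    case False
    then have c: "cnd p E e i" unfolding cnd_def using e by blast
    then have "ch E e i = e i" using ch_eq[OF c e] by simp
    then show ?thesis using c False unfolding fm_def sw_def by simp
  qed
qed

lemma sw_lt: "a < p \<Longrightarrow> d < p \<Longrightarrow> sw a 0 d < p" using p1 unfolding sw_def by auto
lemma sw_inj: "sw a b d = sw a b d' \<Longrightarrow> d = d'" unfolding sw_def by (auto split: if_splits)

lemma f_Qp: assumes x: "x \<in> Qp p" shows "f x \<in> Qp p"
proof -
  obtain e0 where e0: "e0 \<in> E" using ne by blast
  obtain N1 where N1: "\<forall>i<N1. x i = 0" using Qp_low[OF x] by blast
  obtain N2 where N2: "\<forall>i<N2. e0 i = 0" using Qp_low[of e0 p] e0 EQ by blast
  have dig: "f x i < p" for i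
  proof (cases "cnd p E x i")
    case True
    then obtain e where e: "e \<in> E" "\<forall>j<i. e j = x j" unfolding cnd_def by blast
    have "ch E x i = e i" by (rule ch_eq[OF True e])
    moreover have "e i < p" using e EQ Qp_dig by blast
    ultimately show ?thesis using True sw_lt Qp_dig[OF x] unfolding fm_def by simp
  next
    case False then show ?thesis using Qp_dig[OF x] unfolding fm_def by simp
  qed
  have low: "f x i = 0" if "i < min N1 N2" for i
  proof (cases "cnd p E x i")
    case True
    have "\<forall>j<i. e0 j = x j" using that N1 N2 by auto
    then have "ch E x i = e0 i" by (rule ch_eq[OF True e0])
    then show ?thesis using True that N1 N2 unfolding fm_def sw_def by simp
  next
    case False then show ?thesis using that N1 unfolding fm_def by simp
  qed
  show ?thesis unfolding Qp_def using dig low by blast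
qed

lemma f_diff:
  assumes "\<forall>i<m. x i = y i" "x m \<noteq> y m"
  shows "\<forall>i<m. f x i = f y i" "f x m \<noteq> f y m"
proof -
  show "\<forall>i<m. f x i = f y i" using assms(1) by (intro allI impI f_pref) auto
  have c: "cnd p E x m = cnd p E y m" "ch E x m = ch E y m" using pref[OF assms(1)] by auto
  show "f x m \<noteq> f y m" using c assms(2) sw_inj unfolding fm_def by auto
qed

lemma iso: "padic_isometry p f"
  unfolding padic_isometry_def
proof (intro conjI ballI)
  show "f ` Qp p \<subseteq> Qp p" using f_Qp by blast
  fix x y assume x: "x \<in> Qp p" and y: "y \<in> Qp p"
  show "padic_abs p (padic_sub p (f x) (f y)) = padic_abs p (padic_sub p x y)"
  proof (cases "x = y")
    case True then show ?thesis using sub_self[OF x] sub_self[OF f_Qp[OF x]] by simp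
  next
    case False
    then obtain m where m: "\<forall>i<m. x i = y i" "x m \<noteq> y m" using first_diff[OF x y] by blast
    show ?thesis using abs_first[OF x y m] abs_first[OF f_Qp[OF x] f_Qp[OF y] f_diff[OF m]] by simp
  qed
qed

end

context hom begin

lemma fin_ge: "finite {i\<in>I. i \<ge> n}"
proof -
  obtain M where M: "\<forall>i\<in>I. i \<le> M" using Ibdd by blast
  have "{i\<in>I. i \<ge> n} \<subseteq> {n..M}" using M by auto
  then show ?thesis using finite_subset by blast
qed

lemma hat_char: "padic_hat p E = {y \<in> Qp p. \<forall>i. i \<notin> I \<longrightarrow> y i = 0}"
proof
  show "padic_hat p E \<subseteq> {y \<in> Qp p. \<forall>i. i \<notin> I \<longrightarrow> y i = 0}"
  proof
    fix y assume "y \<in> padic_hat p E"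
    then obtain \<beta> where y: "y = padic_of_nonneg p (\<Sum>i \<in> {i \<in> I. \<beta> i \<noteq> 0}. of_nat (\<beta> i) * (of_nat p) powi i)"
      and \<beta>: "\<forall>i \<in> I. \<beta> i < p" "finite {i \<in> I. \<beta> i \<noteq> 0}"
      unfolding padic_hat_def by blast
    define S where "S = {i \<in> I. \<beta> i \<noteq> 0}"
    define b where "b i = (if i \<in> S then \<beta> i else 0)" for i
    have "(\<Sum>i \<in> S. of_nat (\<beta> i) * (of_nat p::rat) powi i) = (\<Sum>i \<in> S. of_nat (b i) * (of_nat p::rat) powi i)"
      unfolding b_def by (intro sum.cong) auto
    moreover have "padic_of_nonneg p (\<Sum>i \<in> S. of_nat (b i) * (of_nat p::rat) powi i) = b"
      using p1 \<beta> unfolding S_def b_def by (intro digits) (auto simp: p1)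
    ultimately have yb: "y = b" using y unfolding S_def by simp
    have blow: "\<exists>N. \<forall>i<N. b i = 0"
    proof (cases "S = {}")
      case True then show ?thesis unfolding b_def by auto
    next
      case False
      have "\<forall>i<Min S. b i = 0"
      proof (intro allI impI)
        fix i assume "i < Min S"
        have fS: "finite S" using \<beta>(2) unfolding S_def .
        have "i \<notin> S"
        proof
          assume "i \<in> S" then have "Min S \<le> i" using Min_le[OF fS] by blast
          with \<open>i < Min S\<close> show False by simp
        qed
        then show "b i = 0" unfolding b_def by simp
      qed
      then show ?thesis by blast
    qed
    have "b \<in> Qp p" unfolding Qp_def using blow \<beta>(1) p1 unfolding b_def S_def by auto
    moreover have "\<forall>i. i \<notin> I \<longrightarrow> b i = 0" unfolding b_def S_def by auto
    ultimately show "y \<in> {y \<in> Qp p. \<forall>i. i \<notin> I \<longrightarrow> y i = 0}" using yb by simp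
  qed
next
  show "{y \<in> Qp p. \<forall>i. i \<notin> I \<longrightarrow> y i = 0} \<subseteq> padic_hat p E"
  proof
    fix y assume yy: "y \<in> {y \<in> Qp p. \<forall>i. i \<notin> I \<longrightarrow> y i = 0}"
    then have y: "y \<in> Qp p" "\<forall>i. i \<notin> I \<longrightarrow> y i = 0" by auto
    obtain N where N: "\<forall>i<N. y i = 0" using Qp_low[OF y(1)] by blast
    define S where "S = {i \<in> I. y i \<noteq> 0}"
    have "S \<subseteq> {i\<in>I. i \<ge> N}" unfolding S_def using N by (auto simp: not_less[symmetric])
    then have fS: "finite S" using fin_ge finite_subset by blast
    have "padic_of_nonneg p (\<Sum>i\<in>S. of_nat (y i) * (of_nat p::rat) powi i) = y"
      using fS y Qp_dig[OF y(1)] p1 unfolding S_def by (intro digits) auto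
    moreover have "\<forall>i \<in> I. y i < p" using Qp_dig[OF y(1)] by blast
    ultimately show "y \<in> padic_hat p E" unfolding padic_hat_def using fS unfolding S_def
      by (intro CollectI exI[of _ y]) auto
  qed
qed

lemma ball_E: "a \<in> Qp p \<Longrightarrow> E \<inter> padic_ball p a n = {x\<in>E. \<forall>i<n. x i = a i}"
  using ball_cyl[OF p1] EQ by auto

lemma homc: "a \<in> Qp p \<Longrightarrow> finite {x\<in>E. \<forall>i<n. x i = a i} \<and>
   card {x\<in>E. \<forall>i<n. x i = a i} \<in> {0, p ^ card {i \<in> I. i \<ge> n}}"
proof -
  assume a: "a \<in> Qp p"
  have "finite (E \<inter> padic_ball p a n) \<and> card (E \<inter> padic_ball p a n) \<in> {0, p ^ card {i \<in> I. i \<ge> n}}"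
    using hom a unfolding p_homogeneous_def by blast
  then show ?thesis unfolding ball_E[OF a] .
qed

lemma children:
  assumes n: "n \<in> I" and e: "e \<in> E" and d: "d < p"
  shows "\<exists>e'\<in>E. (\<forall>j<n. e' j = e j) \<and> e' n = d"
proof -
  define k where "k = card {i \<in> I. i \<ge> n + 1}"
  have "{i \<in> I. i \<ge> n} = insert n {i \<in> I. i \<ge> n + 1}" using n by auto
  then have kn: "card {i \<in> I. i \<ge> n} = Suc k" unfolding k_def using fin_ge[of "n+1"] by simp
  have eQ: "e \<in> Qp p" using e EQ by blast
  define A where "A = {x\<in>E. \<forall>i<n. x i = e i}"
  have "e \<in> A" unfolding A_def using e by simp
  then have cA: "card A = p ^ Suc k" "finite A" using homc[OF eQ, of n] kn unfolding A_def
    by (auto simp: card_gt_0_iff)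
  define a where "a d' = (\<lambda>j. if j < n then e j else if j = n then d' else 0)" for d'
  have aQ: "a d' \<in> Qp p" if "d' < p" for d'
  proof -
    obtain N where N: "\<forall>i<N. e i = 0" using Qp_low[OF eQ] by blast
    have "\<forall>i<min N n. a d' i = 0" using N unfolding a_def by auto
    moreover have "\<forall>i. a d' i < p" using that p1 Qp_dig[OF eQ] unfolding a_def by auto
    ultimately show ?thesis unfolding Qp_def by blast
  qed
  define Ad where "Ad d' = {x\<in>E. \<forall>i<n+1. x i = a d' i}" for d'
  have Ad_eq: "Ad d' = {x\<in>E. (\<forall>i<n. x i = e i) \<and> x n = d'}" for d'
    unfolding Ad_def a_def by (auto; metis less_irrefl zless_add1_eq)
  have cAd: "finite (Ad d') \<and> card (Ad d') \<in> {0, p ^ k}" if "d' < p" for d'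
    using homc[OF aQ[OF that], of "n+1"] unfolding Ad_def k_def by (simp only:)
  have AU: "A = (\<Union>d'\<in>{..<p}. Ad d')"
    unfolding A_def Ad_eq using EQ Qp_dig by blast
  have "card A = (\<Sum>d'\<in>{..<p}. card (Ad d'))"
    unfolding AU using cAd by (intro card_UN_disjoint) (auto simp: Ad_eq)
  show ?thesis
  proof (rule ccontr)
    assume "\<not> ?thesis"
    then have "Ad d = {}" unfolding Ad_eq by blast
    have "(\<Sum>d'\<in>{..<p}. card (Ad d')) < (\<Sum>d'\<in>{..<p}. p ^ k)"
    proof (rule sum_strict_mono_ex1)
      show "\<forall>x\<in>{..<p}. card (Ad x) \<le> p ^ k"
      proof
        fix x assume "x \<in> {..<p}"
        then have "card (Ad x) \<in> {0, p ^ k}" using cAd by blast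
        then show "card (Ad x) \<le> p ^ k" by auto
      qed
      show "\<exists>a\<in>{..<p}. card (Ad a) < p ^ k" using d \<open>Ad d = {}\<close> p1 by (intro bexI[of _ d]) auto
    qed simp
    then show False using cA \<open>card A = (\<Sum>d'\<in>{..<p}. card (Ad d'))\<close> by simp
  qed
qed

lemma surj: assumes y: "y \<in> Qp p" "\<forall>i. i \<notin> I \<longrightarrow> y i = 0" shows "\<exists>e\<in>E. f e = y"
proof -
  obtain M where M: "\<forall>i\<in>I. i \<le> M" using Ibdd by blast
  obtain e0 where e0: "e0 \<in> E" using ne by blast
  obtain N1 where N1: "\<forall>i<N1. y i = 0" using Qp_low[OF y(1)] by blast
  obtain N2 where N2: "\<forall>i<N2. e0 i = 0" using Qp_low[of e0 p] e0 EQ by blast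
  define L where "L = min (min N1 N2) (M + 1)"
  have step: "\<exists>e\<in>E. \<forall>i < L + int t. f e i = y i" for t
  proof (induction t)
    case 0
    have "\<forall>i<L. f e0 i = y i" using f_E[OF e0] N1 N2 unfolding L_def by auto
    then show ?case using e0 by auto
  next
    case (Suc t)
    then obtain e where e: "e \<in> E" "\<forall>i < L + int t. f e i = y i" by blast
    define n where "n = L + int t"
    show ?case
    proof (cases "n \<in> I")
      case True
      obtain e' where e': "e' \<in> E" "\<forall>j<n. e' j = e j" "e' n = y n"
        using children[OF True e(1) Qp_dig[OF y(1)]] by blast
      have "\<forall>i < L + int (Suc t). f e' i = y i"
      proof (intro allI impI)
        fix i assume i: "i < L + int (Suc t)"
        show "f e' i = y i"
        proof (cases "i = n")
          case True then show ?thesis using f_E[OF e'(1)] e'(3) \<open>n \<in> I\<close> by simp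
        next
          case False
          then have "i < n" using i unfolding n_def by simp
          then have "f e' i = f e i" using e'(2) by (intro f_pref) auto
          then show ?thesis using e(2) \<open>i < n\<close> unfolding n_def by simp
        qed
      qed
      then show ?thesis using e' by blast
    next
      case False
      have "\<forall>i < L + int (Suc t). f e i = y i"
      proof (intro allI impI)
        fix i assume "i < L + int (Suc t)"
        then have "i < n \<or> i = n" unfolding n_def by auto
        then show "f e i = y i" using e(2) f_E[OF e(1), of n] y(2) False unfolding n_def by auto
      qed
      then show ?thesis using e by blast
    qed
  qed
  obtain e where e: "e \<in> E" "\<forall>i < L + int (nat (M + 1 - L)). f e i = y i" using step by blast
  have "f e = y"
  proof
    fix i show "f e i = y i"
    proof (cases "i \<le> M")
      case True then show ?thesis using e(2) unfolding L_def by auto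
    next
      case False then have "i \<notin> I" using M by auto
      then show ?thesis using f_E[OF e(1)] y(2) by simp
    qed
  qed
  then show ?thesis using e by blast
qed

lemma main: "\<exists>f. padic_isometry p f \<and> f ` E = padic_hat p E"
proof (intro exI conjI)
  show "padic_isometry p f" by (rule iso)
  show "f ` E = padic_hat p E"
  proof
    show "f ` E \<subseteq> padic_hat p E" unfolding hat_char using f_E f_Qp EQ by auto
    show "padic_hat p E \<subseteq> f ` E" unfolding hat_char using surj by blast
  qed
qed

end

theorem lemma2p14:
  fixes p :: nat and E :: "(int \<Rightarrow> nat) set"
  assumes "prime p"
    and "E \<noteq> {}"
    and "p_homogeneous p E"
  shows "\<exists>f. padic_isometry p f \<and> f ` E = padic_hat p E"
proof -
  interpret hom p E using assms by unfold_locales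
  show ?thesis by (rule main)
qed

end
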